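(* Let $D$ be a Ferrers diagram with $n$ rows and $n$ columns, i.e. $D = \{(a,b) : 1 \le a \le n,\ 1 \le b \le \lambda_a\}$ for integers $n = \lambda_1 \ge \lambda_2 \ge \cdots \ge \lambda_n \ge 1$. Let $G$ be its Ferrers graph: the bipartite graph with row-vertices $1,\dots,n$ and column-vertices $1,\dots,n$, row $a$ adjacent to column $b$ if and only if $(a,b) \in D$. Every Hamiltonian path of $G$ has one end a row-vertex and the other a column-vertex; write it, starting from its row end, as $a_1, b_1, a_2, b_2, \dots, a_n, b_n$ (the $a_i$ rows, the $b_i$ columns). An $n$-rook placement on $D$ is a set of $n$ boxes of $D$, no two in the same row or column. Define a map $\Phi$ on Hamiltonian paths of $G$ as follows. Set $b_0 := 1$ and start with two empty sets $A$, $B$ of boxes. For $i = 1, \dots, n$ in turn: if no box of $A$ lies in column $b_{i-1}$, add the box $(a_i, b_{i-1})$ to $A$; otherwise add to $A$ the box $(a_i, c)$, where $c$ is the smallest column index greater than $b_{i-1}$ such that no box of $A$ lies in column $c$; then add the box $(a_i, b_i)$ to $B$. Set $\Phi(\text{path}) = (A, B)$. Then $\Phi$ is well defined (in particular the column $c$ always exists and every box added to $A$ lies in $D$), and $\Phi$ is a bijection from the set of Hamiltonian paths of $G$ onto the set of ordered pairs $(A,B)$ of $n$-rook placements on $D$. Consequently the number of Hamiltonian paths of $G$ equals the square of the number of $n$-rook placements on $D$.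
   Context: Boxes are indexed as $(a,b)$ = (row, column). Hamiltonian paths are regarded as undirected paths through all $2n$ vertices; each is recorded uniquely as the vertex sequence starting from its row-vertex end. *)

theory Defs
  imports Main
begin

definition ferrers_shape :: "nat \<Rightarrow> (nat \<Rightarrow> nat) \<Rightarrow> bool" where
  "ferrers_shape n lam \<longleftrightarrow> n \<ge> 1 \<and> lam 1 = n \<and>
     (\<forall>a. 1 \<le> a \<and> a < n \<longrightarrow> lam (Suc a) \<le> lam a) \<and> lam n \<ge> 1"

definition ferrers_diagram :: "nat \<Rightarrow> (nat \<Rightarrow> nat) \<Rightarrow> (nat \<times> nat) set" where
  "ferrers_diagram n lam = {(a, b). 1 \<le> a \<and> a \<le> n \<and> 1 \<le> b \<and> b \<le> lam a}"

text \<open>Ferrers graph: vertices Inl a (row a) and Inr b (column b), 1 <= a,b <= n.\<close>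
definition fg_vertices :: "nat \<Rightarrow> (nat + nat) set" where
  "fg_vertices n = Inl ` {1..n} \<union> Inr ` {1..n}"

fun fg_adj :: "(nat \<times> nat) set \<Rightarrow> nat + nat \<Rightarrow> nat + nat \<Rightarrow> bool" where
  "fg_adj D (Inl a) (Inr b) = ((a, b) \<in> D)"
| "fg_adj D (Inr b) (Inl a) = ((a, b) \<in> D)"
| "fg_adj D _ _ = False"

text \<open>Hamiltonian paths of the Ferrers graph, each recorded as its vertex sequence
  starting from its row-vertex end.\<close>
definition ham_paths :: "nat \<Rightarrow> (nat \<Rightarrow> nat) \<Rightarrow> (nat + nat) list set" where
  "ham_paths n lam = {vs. distinct vs \<and> set vs = fg_vertices n \<and>
      (\<forall>i. Suc i < length vs \<longrightarrow> fg_adj (ferrers_diagram n lam) (vs ! i) (vs ! Suc i)) \<and>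
      vs \<noteq> [] \<and> isl (hd vs)}"

text \<open>The pairs (a_i, b_i), i = 1..n, of a path a_1, b_1, ..., a_n, b_n.\<close>
definition path_pairs :: "nat \<Rightarrow> (nat + nat) list \<Rightarrow> (nat \<times> nat) list" where
  "path_pairs n vs = map (\<lambda>i. (projl (vs ! (2 * i)), projr (vs ! (2 * i + 1)))) [0..<n]"

definition rook_placements :: "nat \<Rightarrow> (nat \<Rightarrow> nat) \<Rightarrow> (nat \<times> nat) set set" where
  "rook_placements n lam = {R. R \<subseteq> ferrers_diagram n lam \<and> card R = n \<and>
      inj_on fst R \<and> inj_on snd R}"

definition phi_col :: "nat \<Rightarrow> (nat \<times> nat) set \<Rightarrow> nat" where
  "phi_col prev A = (if prev \<notin> snd ` A then prev else (LEAST c. prev < c \<and> c \<notin> snd ` A))"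

fun phi_aux :: "(nat \<times> nat) list \<Rightarrow> nat \<Rightarrow> (nat \<times> nat) set \<Rightarrow> (nat \<times> nat) set
                 \<Rightarrow> (nat \<times> nat) set \<times> (nat \<times> nat) set" where
  "phi_aux [] prev A B = (A, B)"
| "phi_aux ((a, b) # ps) prev A B =
     phi_aux ps b (insert (a, phi_col prev A) A) (insert (a, b) B)"

definition Phi :: "nat \<Rightarrow> (nat + nat) list \<Rightarrow> (nat \<times> nat) set \<times> (nat \<times> nat) set" where
  "Phi n vs = phi_aux (path_pairs n vs) 1 {} {}"

text \<open>State before step i+1 (0-based i): A after i steps and the column b_i (b_0 = 1).\<close>
definition phi_A_before :: "nat \<Rightarrow> (nat + nat) list \<Rightarrow> nat \<Rightarrow> (nat \<times> nat) set" where
  "phi_A_before n vs i = fst (phi_aux (take i (path_pairs n vs)) 1 {} {})"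

definition phi_prev :: "nat \<Rightarrow> (nat + nat) list \<Rightarrow> nat \<Rightarrow> nat" where
  "phi_prev n vs i = (if i = 0 then 1 else snd (path_pairs n vs ! (i - 1)))"

end

theory Submission
  imports Defs
begin


definition colsel :: "nat \<Rightarrow> nat set \<Rightarrow> nat" where
  "colsel p S = (if p \<notin> S then p else (LEAST c. p < c \<and> c \<notin> S))"

definition mex :: "nat set \<Rightarrow> nat" where
  "mex S = (LEAST m. 1 \<le> m \<and> m \<notin> S)"

definition pvk :: "(nat \<Rightarrow> nat) \<Rightarrow> nat \<Rightarrow> nat" where
  "pvk k i = (if i = 0 then 1 else k (i - 1))"

fun ust :: "(nat \<Rightarrow> nat) \<Rightarrow> nat \<Rightarrow> nat set" where
  "ust k 0 = {}"
| "ust k (Suc i) = insert (colsel (pvk k i) (ust k i)) (ust k i)"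

definition cc :: "(nat \<Rightarrow> nat) \<Rightarrow> nat \<Rightarrow> nat" where
  "cc k i = colsel (pvk k i) (ust k i)"

lemma phi_col_colsel: "phi_col p A = colsel p (snd ` A)"
  by (simp add: phi_col_def colsel_def)

lemma colsel_ex:
  fixes S :: "nat set"
  assumes "finite S" shows "\<exists>c. p < c \<and> c \<notin> S"
proof -
  have "Suc (Max (insert p S)) \<notin> S" using assms
    by (metis Max_ge finite_insert insertCI not_less_eq_eq order_refl)
  moreover have "p < Suc (Max (insert p S))" using assms
    by (simp add: le_imp_less_Suc)
  ultimately show ?thesis by blast
qed

lemma colsel_notin: "finite S \<Longrightarrow> colsel p S \<notin> S"
  unfolding colsel_def using LeastI_ex[OF colsel_ex] by auto

lemma colsel_ge: "finite S \<Longrightarrow> p \<le> colsel p S"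
  unfolding colsel_def using LeastI_ex[OF colsel_ex, of S p] by auto

lemma mex_ex: "finite S \<Longrightarrow> \<exists>m. 1 \<le> m \<and> m \<notin> (S::nat set)"
  using colsel_ex[of S 0] by (auto simp: Suc_le_eq)

lemma mex_notin: "finite S \<Longrightarrow> mex S \<notin> S"
  unfolding mex_def using LeastI_ex[OF mex_ex] by auto

lemma mex_ge1: "finite S \<Longrightarrow> 1 \<le> mex S"
  unfolding mex_def using LeastI_ex[OF mex_ex] by auto

lemma mex_below: "1 \<le> j \<Longrightarrow> j < mex S \<Longrightarrow> j \<in> S"
  unfolding mex_def using not_less_Least by blast

lemma mex_le: "1 \<le> j \<Longrightarrow> j \<notin> S \<Longrightarrow> mex S \<le> j"
  unfolding mex_def by (simp add: Least_le)

lemma mex_card: "finite S \<Longrightarrow> mex S \<le> card S + 1"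
proof -
  assume f: "finite S"
  have "{1..<mex S} \<subseteq> S" using mex_below by auto
  then have "card {1..<mex S} \<le> card S" by (rule card_mono[OF f])
  then have "mex S - 1 \<le> card S" by simp
  then show ?thesis by linarith
qed

lemma mex_step:
  assumes "finite P"
  shows "(LEAST c. mex P < c \<and> c \<notin> insert (mex P) P) = mex (insert (mex P) P)"
    and "mex P < mex (insert (mex P) P)"
proof -
  let ?m = "mex P" and ?m2 = "mex (insert (mex P) P)"
  have f2: "finite (insert ?m P)" using assms by simp
  have n2: "?m2 \<notin> insert ?m P" by (rule mex_notin[OF f2])
  have g2: "1 \<le> ?m2" by (rule mex_ge1[OF f2])
  show lt: "?m < ?m2"
  proof (rule ccontr)
    assume "\<not> ?m < ?m2"
    then have "?m2 < ?m" using n2 by auto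
    then have "?m2 \<in> P" using mex_below g2 by blast
    then show False using n2 by auto
  qed
  show "(LEAST c. ?m < c \<and> c \<notin> insert ?m P) = ?m2"
  proof (rule Least_equality)
    show "?m < ?m2 \<and> ?m2 \<notin> insert ?m P" using lt n2 by auto
  next
    fix y assume "?m < y \<and> y \<notin> insert ?m P"
    then show "?m2 \<le> y" by (intro mex_le) auto
  qed
qed

lemma mex_insert_other:
  assumes "finite P" "b \<notin> P" "b \<noteq> mex P"
  shows "mex (insert b P) = mex P"
  unfolding mex_def[of "insert b P"]
proof (rule Least_equality)
  show "1 \<le> mex P \<and> mex P \<notin> insert b P" using assms mex_ge1 mex_notin by auto
next
  fix y assume "1 \<le> y \<and> y \<notin> insert b P"
  then show "mex P \<le> y" using mex_le by auto
qed

lemma inj_new: "inj_on k {..<Suc i} \<Longrightarrow> k i \<notin> k ` {..<i}"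
proof
  assume a: "inj_on k {..<Suc i}" "k i \<in> k ` {..<i}"
  then obtain x where "x < i" "k i = k x" by auto
  then show False using inj_onD[OF a(1), of i x] by simp
qed

lemma finite_ust: "finite (ust k i)"
  by (induction i) auto

lemma ust_eq: "ust k i = cc k ` {..<i}"
  by (induction i) (auto simp: cc_def lessThan_Suc)

lemma cc_notin: "cc k i \<notin> ust k i"
  unfolding cc_def by (rule colsel_notin[OF finite_ust])

lemma cc_inj: "inj_on (cc k) {..<n}"
proof (rule inj_onI)
  fix x y assume xy: "x \<in> {..<n}" "y \<in> {..<n}" "cc k x = cc k y"
  show "x = y"
  proof (rule ccontr)
    assume "x \<noteq> y"
    then consider "x < y" | "y < x" by linarith
    then show False
    proof cases
      case 1 then have "cc k x \<in> ust k y" by (simp add: ust_eq)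
      then show False using cc_notin xy by metis
    next
      case 2 then have "cc k y \<in> ust k x" by (simp add: ust_eq)
      then show False using cc_notin xy by metis
    qed
  qed
qed

lemma cc_ge_pv: "pvk k i \<le> cc k i"
  unfolding cc_def by (rule colsel_ge[OF finite_ust])

lemma ust_inv:
  assumes "inj_on k {..<i}" "\<forall>j<i. 1 \<le> k j"
  shows "ust k (Suc i) = insert (mex (k ` {..<i})) (k ` {..<i})"
  using assms
proof (induction i)
  case 0
  have "mex {} = 1" unfolding mex_def by (rule Least_equality) auto
  then show ?case by (simp add: pvk_def colsel_def)
next
  case (Suc i)
  let ?P = "k ` {..<i}"
  let ?m = "mex ?P"
  have i1: "inj_on k {..<i}" by (rule inj_on_subset[OF Suc.prems(1)]) auto
  have i2: "\<forall>j<i. 1 \<le> k j" using Suc.prems(2) by auto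
  have IH: "ust k (Suc i) = insert ?m ?P"
    using Suc.IH[OF i1 i2] .
  have kin: "k i \<notin> ?P" using inj_new[OF Suc.prems(1)] .
  have fP: "finite ?P" by simp
  have img: "k ` {..<Suc i} = insert (k i) ?P" by (simp add: lessThan_Suc)
  have pv: "pvk k (Suc i) = k i" by (simp add: pvk_def)
  show ?case
  proof (cases "k i = ?m")
    case True
    have "colsel (pvk k (Suc i)) (ust k (Suc i)) = mex (insert ?m ?P)"
      unfolding pv IH colsel_def using True mex_step(1)[OF fP] by simp
    then show ?thesis using IH img True by simp
  next
    case False
    have "colsel (pvk k (Suc i)) (ust k (Suc i)) = k i"
      unfolding pv IH colsel_def using False kin by simp
    moreover have "mex (insert (k i) ?P) = ?m"
      using mex_insert_other[OF fP kin False] .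
    ultimately show ?thesis using IH img by auto
  qed
qed

lemma cc_in:
  assumes "inj_on k {..<i}" "\<forall>j<i. 1 \<le> k j" "pvk k i \<in> ust k i"
  shows "pvk k i < cc k i \<and> cc k i = mex (k ` {..<i})"
proof (cases i)
  case 0
  then show ?thesis using assms by simp
next
  case (Suc i')
  let ?P = "k ` {..<i'}"
  let ?m = "mex ?P"
  have i1: "inj_on k {..<i'}" by (rule inj_on_subset[OF assms(1)]) (auto simp: Suc)
  have i2: "\<forall>j<i'. 1 \<le> k j" using assms(2) Suc by auto
  have U: "ust k i = insert ?m ?P" unfolding Suc by (rule ust_inv[OF i1 i2])
  have kin: "k i' \<notin> ?P" using inj_new[of k i'] assms(1) Suc by simp
  have pv: "pvk k i = k i'" by (simp add: pvk_def Suc)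
  have km: "k i' = ?m" using assms(3) U pv kin by auto
  have fP: "finite ?P" by simp
  have img: "k ` {..<i} = insert ?m ?P" using Suc km by (simp add: lessThan_Suc)
  have "cc k i = mex (insert ?m ?P)"
    unfolding cc_def pv U colsel_def using km mex_step(1)[OF fP] by simp
  then show ?thesis using img pv km mex_step(2)[OF fP] by simp
qed

lemma cc_out: "pvk k i \<notin> ust k i \<Longrightarrow> cc k i = pvk k i"
  by (simp add: cc_def colsel_def)

lemma pvk_ge1: "\<forall>j<i. 1 \<le> k j \<Longrightarrow> 1 \<le> pvk k i"
  by (simp add: pvk_def)

lemma cc_ge1: "\<forall>j<i. 1 \<le> k j \<Longrightarrow> 1 \<le> cc k i"
  using pvk_ge1 cc_ge_pv le_trans by blast

lemma cc_bound:
  assumes "inj_on k {..<i}" "\<forall>j<i. 1 \<le> k j" "pvk k i \<in> ust k i"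
  shows "cc k i \<le> Suc i"
proof -
  have "cc k i = mex (k ` {..<i})" using cc_in[OF assms] by simp
  also have "\<dots> \<le> card (k ` {..<i}) + 1" by (rule mex_card) simp
  also have "card (k ` {..<i}) \<le> i" using card_image_le[of "{..<i}" k] by simp
  finally show ?thesis by simp
qed

lemma cc_le_k:
  assumes "inj_on k {..<Suc i}" "\<forall>j<Suc i. 1 \<le> k j" "pvk k i \<in> ust k i"
  shows "cc k i \<le> k i"
proof -
  have i1: "inj_on k {..<i}" by (rule inj_on_subset[OF assms(1)]) auto
  have i2: "\<forall>j<i. 1 \<le> k j" using assms(2) by auto
  have "cc k i = mex (k ` {..<i})" using cc_in[OF i1 i2 assms(3)] by simp
  moreover have "k i \<notin> k ` {..<i}" using inj_new[OF assms(1)] .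
  ultimately show ?thesis using mex_le assms(2) by simp
qed



lemma phi_aux_snoc:
  "phi_aux (xs @ [(a,b)]) p A B =
     (case phi_aux xs p A B of (A', B') \<Rightarrow>
        (insert (a, phi_col (if xs = [] then p else snd (last xs)) A') A', insert (a,b) B'))"
proof (induction xs arbitrary: p A B)
  case Nil
  then show ?case by simp
next
  case (Cons x xs)
  obtain a0 b0 where x: "x = (a0, b0)" by (cases x)
  show ?case using Cons.IH by (simp add: x)
qed

lemma phi_map:
  "phi_aux (map (\<lambda>i. (r i, k i)) [0..<m]) 1 {} {} =
     ((\<lambda>j. (r j, cc k j)) ` {..<m}, (\<lambda>j. (r j, k j)) ` {..<m})"
proof (induction m)
  case 0
  then show ?case by simp
next
  case (Suc m)
  have pv: "(if map (\<lambda>i. (r i, k i)) [0..<m] = [] then 1 else snd (last (map (\<lambda>i. (r i, k i)) [0..<m]))) = pvk k m"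
    by (cases m) (auto simp: pvk_def)
  have sn: "snd ` ((\<lambda>j. (r j, cc k j)) ` {..<m}) = ust k m"
    by (auto simp: ust_eq image_image)
  have "phi_col (pvk k m) ((\<lambda>j. (r j, cc k j)) ` {..<m}) = cc k m"
    unfolding phi_col_colsel sn by (simp add: cc_def)
  have "phi_aux (map (\<lambda>i. (r i, k i)) [0..<Suc m]) 1 {} {} = phi_aux (map (\<lambda>i. (r i, k i)) [0..<m] @ [(r m, k m)]) 1 {} {}" by simp
  also have "\<dots> = (insert (r m, phi_col (pvk k m) ((\<lambda>j. (r j, cc k j)) ` {..<m})) ((\<lambda>j. (r j, cc k j)) ` {..<m}), insert (r m, k m) ((\<lambda>j. (r j, k j)) ` {..<m}))"
    unfolding phi_aux_snoc Suc.IH pv by simp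
  finally show ?case using \<open>phi_col _ _ = cc k m\<close> by (simp add: lessThan_Suc)
qed

definition rr :: "(nat + nat) list \<Rightarrow> nat \<Rightarrow> nat" where
  "rr vs i = projl (vs ! (2 * i))"
definition kv :: "(nat + nat) list \<Rightarrow> nat \<Rightarrow> nat" where
  "kv vs i = projr (vs ! (2 * i + 1))"

lemma path_pairs_eq: "path_pairs n vs = map (\<lambda>i. (rr vs i, kv vs i)) [0..<n]"
  by (simp add: path_pairs_def rr_def kv_def)

lemma adj_isl: "fg_adj D x y \<Longrightarrow> isl y = (\<not> isl x)"
  by (cases x; cases y) auto

lemma card_fg: "card (fg_vertices n) = 2 * n"
proof -
  have "card (Inl ` {1..n} \<union> Inr ` {1..n} :: (nat + nat) set) = card (Inl ` {1..n} :: (nat+nat) set) + card (Inr ` {1..n} :: (nat+nat) set)"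
    by (rule card_Un_disjoint) auto
  also have "\<dots> = n + n" by (simp add: card_image)
  finally show ?thesis by (simp add: fg_vertices_def)
qed

lemma ham_struct:
  assumes "vs \<in> ham_paths n lam"
  shows "length vs = 2 * n"
    and "\<And>j. j < length vs \<Longrightarrow> isl (vs ! j) = even j"
proof -
  have d: "distinct vs" and s: "set vs = fg_vertices n" using assms by (auto simp: ham_paths_def)
  show "length vs = 2 * n" using distinct_card[OF d] s card_fg by simp
next
  fix j assume "j < length vs"
  then show "isl (vs ! j) = even j"
  proof (induction j)
    case 0
    then show ?case using assms by (auto simp: ham_paths_def hd_conv_nth)
  next
    case (Suc j)
    have "fg_adj (ferrers_diagram n lam) (vs ! j) (vs ! Suc j)"
      using assms Suc.prems by (auto simp: ham_paths_def)
    then show ?case using Suc adj_isl by auto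
  qed
qed

lemma ham_facts:
  assumes "vs \<in> ham_paths n lam"
  shows "length vs = 2 * n"
    and "\<And>i. i < n \<Longrightarrow> vs ! (2 * i) = Inl (rr vs i) \<and> vs ! (2 * i + 1) = Inr (kv vs i)"
    and "\<And>i. i < n \<Longrightarrow> rr vs i \<in> {1..n} \<and> kv vs i \<in> {1..n}"
    and "inj_on (rr vs) {..<n}" and "inj_on (kv vs) {..<n}"
    and "\<And>i. i < n \<Longrightarrow> (rr vs i, kv vs i) \<in> ferrers_diagram n lam"
    and "\<And>i. Suc i < n \<Longrightarrow> (rr vs (Suc i), kv vs i) \<in> ferrers_diagram n lam"
proof -
  have d: "distinct vs" and s: "set vs = fg_vertices n"
    and adj: "\<And>i. Suc i < length vs \<Longrightarrow> fg_adj (ferrers_diagram n lam) (vs ! i) (vs ! Suc i)"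
    using assms by (auto simp: ham_paths_def)
  note L = ham_struct[OF assms]
  show L1: "length vs = 2 * n" by (rule L(1))
  show E: "vs ! (2 * i) = Inl (rr vs i) \<and> vs ! (2 * i + 1) = Inr (kv vs i)" if "i < n" for i
  proof -
    have "isl (vs ! (2*i))" "\<not> isl (vs ! (2*i+1))" using L(2)[of "2*i"] L(2)[of "2*i+1"] L1 that by auto
    then show ?thesis unfolding rr_def kv_def by (simp add: sum.collapse)
  qed
  show "rr vs i \<in> {1..n} \<and> kv vs i \<in> {1..n}" if "i < n" for i
  proof -
    have "vs ! (2*i) \<in> set vs" "vs ! (2*i+1) \<in> set vs" using L1 that by auto
    then have "Inl (rr vs i) \<in> fg_vertices n" "Inr (kv vs i) \<in> fg_vertices n" using E[OF that] s by auto
    then show ?thesis by (auto simp: fg_vertices_def)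
  qed
  show "inj_on (rr vs) {..<n}"
  proof (rule inj_onI)
    fix x y assume "x \<in> {..<n}" "y \<in> {..<n}" "rr vs x = rr vs y"
    then have "vs ! (2*x) = vs ! (2*y)" "2*x < length vs" "2*y < length vs" using E L1 by auto
    then show "x = y" using d nth_eq_iff_index_eq by fastforce
  qed
  show "inj_on (kv vs) {..<n}"
  proof (rule inj_onI)
    fix x y assume "x \<in> {..<n}" "y \<in> {..<n}" "kv vs x = kv vs y"
    then have "vs ! (2*x+1) = vs ! (2*y+1)" "2*x+1 < length vs" "2*y+1 < length vs" using E L1 by auto
    then show "x = y" using d nth_eq_iff_index_eq by fastforce
  qed
  show "(rr vs i, kv vs i) \<in> ferrers_diagram n lam" if "i < n" for i
    using adj[of "2*i"] E[OF that] L1 that by auto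
  show "(rr vs (Suc i), kv vs i) \<in> ferrers_diagram n lam" if "Suc i < n" for i
  proof -
    have "fg_adj (ferrers_diagram n lam) (vs ! (2*i+1)) (vs ! Suc (2*i+1))" using adj L1 that by auto
    moreover have "Suc (2*i+1) = 2 * Suc i" by simp
    ultimately show ?thesis using E[of i] E[of "Suc i"] that by auto
  qed
qed

definition mkpath :: "nat \<Rightarrow> (nat \<Rightarrow> nat) \<Rightarrow> (nat \<Rightarrow> nat) \<Rightarrow> (nat + nat) list" where
  "mkpath n r k = map (\<lambda>j. if even j then Inl (r (j div 2)) else Inr (k (j div 2))) [0..<2*n]"

lemma ham_eq_mkpath:
  assumes "vs \<in> ham_paths n lam"
  shows "vs = mkpath n (rr vs) (kv vs)"
proof (rule nth_equalityI)
  show "length vs = length (mkpath n (rr vs) (kv vs))" using ham_facts(1)[OF assms] by (simp add: mkpath_def)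
next
  fix j assume j: "j < length vs"
  then have jn: "j div 2 < n" using ham_facts(1)[OF assms] by simp
  have m: "mkpath n (rr vs) (kv vs) ! j = (if even j then Inl (rr vs (j div 2)) else Inr (kv vs (j div 2)))"
    using j ham_facts(1)[OF assms] by (simp add: mkpath_def)
  show "vs ! j = mkpath n (rr vs) (kv vs) ! j"
  proof (cases "even j")
    case True
    then have "j = 2 * (j div 2)" by simp
    then show ?thesis using m True ham_facts(2)[OF assms jn] by metis
  next
    case False
    then have "j = 2 * (j div 2) + 1" by presburger
    then show ?thesis using m False ham_facts(2)[OF assms jn] by metis
  qed
qed



lemma lam_le:
  assumes "ferrers_shape n lam" "1 \<le> a" "a \<le> n"
  shows "lam a \<le> n"
  using assms(2,3)
proof (induction a rule: nat_induct_at_least)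
  case base
  then show ?case using assms(1) by (simp add: ferrers_shape_def)
next
  case (Suc m)
  then have "lam (Suc m) \<le> lam m" using assms(1) by (simp add: ferrers_shape_def)
  then show ?case using Suc by simp
qed

lemma D_down: "(a, b) \<in> ferrers_diagram n lam \<Longrightarrow> 1 \<le> b' \<Longrightarrow> b' \<le> b \<Longrightarrow> (a, b') \<in> ferrers_diagram n lam"
  by (auto simp: ferrers_diagram_def)

lemma D_sub: "ferrers_shape n lam \<Longrightarrow> x \<in> ferrers_diagram n lam \<Longrightarrow> fst x \<in> {1..n} \<and> snd x \<in> {1..n}"
  using lam_le[of n lam "fst x"] by (auto simp: ferrers_diagram_def)

lemma finite_D: "ferrers_shape n lam \<Longrightarrow> finite (ferrers_diagram n lam)"
proof -
  assume f: "ferrers_shape n lam"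
  have "ferrers_diagram n lam \<subseteq> {1..n} \<times> {1..n}" using D_sub[OF f] by (auto simp: mem_Times_iff)
  then show ?thesis by (rule finite_subset) simp
qed

lemma ust_cong: "(\<forall>j<i. k j = k' j) \<Longrightarrow> ust k i = ust k' i"
proof (induction i)
  case 0 then show ?case by simp
next
  case (Suc i)
  then have "pvk k i = pvk k' i" by (simp add: pvk_def)
  then show ?case using Suc by simp
qed

lemma cc_cong: "(\<forall>j<i. k j = k' j) \<Longrightarrow> cc k i = cc k' i"
  using ust_cong[of i k k'] by (simp add: cc_def pvk_def)

lemma phi_A_before_eq:
  assumes "i \<le> n"
  shows "phi_A_before n vs i = (\<lambda>j. (rr vs j, cc (kv vs) j)) ` {..<i}"
proof -
  have t: "take i (path_pairs n vs) = map (\<lambda>j. (rr vs j, kv vs j)) [0..<i]"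
    using assms by (simp add: path_pairs_eq take_map min_def)
  show ?thesis unfolding phi_A_before_def t phi_map by simp
qed

lemma phi_prev_eq: "i < n \<Longrightarrow> phi_prev n vs i = pvk (kv vs) i"
  by (cases i) (simp_all add: phi_prev_def pvk_def path_pairs_eq)

lemma Phi_eq: "Phi n vs = ((\<lambda>j. (rr vs j, cc (kv vs) j)) ` {..<n}, (\<lambda>j. (rr vs j, kv vs j)) ` {..<n})"
  unfolding Phi_def path_pairs_eq phi_map ..

lemma kv_pos: "vs \<in> ham_paths n lam \<Longrightarrow> \<forall>j<i. i \<le> n \<longrightarrow> 1 \<le> kv vs j"
  using ham_facts(3) by fastforce

lemma cc_D:
  assumes vs: "vs \<in> ham_paths n lam" and i: "i < n"
  shows "(rr vs i, cc (kv vs) i) \<in> ferrers_diagram n lam"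
proof -
  let ?k = "kv vs"
  have pos: "\<forall>j<Suc i. 1 \<le> ?k j" using ham_facts(3)[OF vs] i by auto
  have inj: "inj_on ?k {..<Suc i}" by (rule inj_on_subset[OF ham_facts(5)[OF vs]]) (use i in auto)
  have g1: "1 \<le> cc ?k i" by (rule cc_ge1) (use pos in auto)
  have e: "(rr vs i, ?k i) \<in> ferrers_diagram n lam" by (rule ham_facts(6)[OF vs i])
  show ?thesis
  proof (cases "pvk ?k i \<in> ust ?k i")
    case True
    have "cc ?k i \<le> ?k i" by (rule cc_le_k[OF inj pos True])
    then show ?thesis using D_down[OF e g1] by simp
  next
    case False
    then have c: "cc ?k i = pvk ?k i" by (rule cc_out)
    show ?thesis
    proof (cases i)
      case 0
      then show ?thesis using c e D_down[OF e] pos by (simp add: pvk_def)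
    next
      case (Suc i')
      then show ?thesis using c ham_facts(7)[OF vs, of i'] i by (simp add: pvk_def)
    qed
  qed
qed

lemma cc_exists:
  assumes vs: "vs \<in> ham_paths n lam" and i: "i < n" and p: "pvk (kv vs) i \<in> ust (kv vs) i"
  shows "\<exists>c. pvk (kv vs) i < c \<and> c \<le> n \<and> c \<notin> ust (kv vs) i"
proof -
  let ?k = "kv vs"
  have pos: "\<forall>j<i. 1 \<le> ?k j" using ham_facts(3)[OF vs] i by auto
  have inj: "inj_on ?k {..<i}" by (rule inj_on_subset[OF ham_facts(5)[OF vs]]) (use i in auto)
  show ?thesis
    using cc_in[OF inj pos p] cc_bound[OF inj pos p] cc_notin[of ?k i] i by auto
qed

lemma rook_img:
  assumes "inj_on r {..<n}" "inj_on f {..<n}" "\<forall>j<n. (r j, f j) \<in> ferrers_diagram n lam"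
  shows "(\<lambda>j. (r j, f j)) ` {..<n} \<in> rook_placements n lam"
proof -
  have i1: "inj_on (\<lambda>j. (r j, f j)) {..<n}" using assms(1) by (auto simp: inj_on_def)
  have "inj_on fst ((\<lambda>j. (r j, f j)) ` {..<n})" using assms(1) by (auto simp: inj_on_def)
  moreover have "inj_on snd ((\<lambda>j. (r j, f j)) ` {..<n})" using assms(2) by (auto simp: inj_on_def)
  moreover have "card ((\<lambda>j. (r j, f j)) ` {..<n}) = n" using card_image[OF i1] by simp
  ultimately show ?thesis using assms(3) by (auto simp: rook_placements_def)
qed

lemma Phi_in:
  assumes vs: "vs \<in> ham_paths n lam"
  shows "Phi n vs \<in> rook_placements n lam \<times> rook_placements n lam"
proof -
  have "(\<lambda>j. (rr vs j, cc (kv vs) j)) ` {..<n} \<in> rook_placements n lam"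
    by (rule rook_img[OF ham_facts(4)[OF vs] cc_inj]) (use cc_D[OF vs] in auto)
  moreover have "(\<lambda>j. (rr vs j, kv vs j)) ` {..<n} \<in> rook_placements n lam"
    by (rule rook_img[OF ham_facts(4)[OF vs] ham_facts(5)[OF vs]]) (use ham_facts(6)[OF vs] in auto)
  ultimately show ?thesis by (simp add: Phi_eq)
qed

lemma mkpath_cong: "(\<forall>i<n. r i = r' i \<and> k i = k' i) \<Longrightarrow> mkpath n r k = mkpath n r' k'"
  unfolding mkpath_def by (rule map_cong) auto

lemma Phi_inj:
  assumes "ferrers_shape n lam"
  shows "inj_on (Phi n) (ham_paths n lam)"
proof (rule inj_onI)
  fix vs vs' assume vs: "vs \<in> ham_paths n lam" and vs': "vs' \<in> ham_paths n lam"
    and eq: "Phi n vs = Phi n vs'"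
  let ?r = "rr vs" and ?k = "kv vs" and ?r' = "rr vs'" and ?k' = "kv vs'"
  have A: "(\<lambda>j. (?r j, cc ?k j)) ` {..<n} = (\<lambda>j. (?r' j, cc ?k' j)) ` {..<n}"
   and B: "(\<lambda>j. (?r j, ?k j)) ` {..<n} = (\<lambda>j. (?r' j, ?k' j)) ` {..<n}"
    using eq by (simp_all add: Phi_eq)
  have "\<forall>i'<i. ?r i' = ?r' i' \<and> ?k i' = ?k' i'" if "i \<le> n" for i
    using that
  proof (induction i)
    case 0 then show ?case by simp
  next
    case (Suc i)
    then have IH: "\<forall>i'<i. ?r i' = ?r' i' \<and> ?k i' = ?k' i'" and i: "i < n" by auto
    have ce: "cc ?k i = cc ?k' i" by (rule cc_cong) (use IH in auto)
    have "(?r i, cc ?k i) \<in> (\<lambda>j. (?r' j, cc ?k' j)) ` {..<n}" using A i by blast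
    then obtain j where j: "j < n" "?r i = ?r' j" "cc ?k i = cc ?k' j" by auto
    then have "j = i" using ce inj_onD[OF cc_inj[of ?k' n], of j i] i by auto
    then have ri: "?r i = ?r' i" using j by simp
    have "(?r i, ?k i) \<in> (\<lambda>j. (?r' j, ?k' j)) ` {..<n}" using B i by blast
    then obtain j' where j': "j' < n" "?r i = ?r' j'" "?k i = ?k' j'" by auto
    then have "j' = i" using ri inj_onD[OF ham_facts(4)[OF vs'], of j' i] i by auto
    then have "?k i = ?k' i" using j' by simp
    then show ?case using IH ri less_Suc_eq by auto
  qed
  then have "\<forall>i<n. ?r i = ?r' i \<and> ?k i = ?k' i" by blast
  then show "vs = vs'" using ham_eq_mkpath[OF vs] ham_eq_mkpath[OF vs'] mkpath_cong by metis
qed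



lemma mkpath_nth: "j < 2 * n \<Longrightarrow> mkpath n r k ! j = (if even j then Inl (r (j div 2)) else Inr (k (j div 2)))"
  by (simp add: mkpath_def)

lemma mkpath_ham:
  assumes n1: "1 \<le> n"
    and ir: "inj_on r {..<n}" and rimg: "r ` {..<n} = {1..n}"
    and ik: "inj_on k {..<n}" and kimg: "k ` {..<n} = {1..n}"
    and e1: "\<forall>i<n. (r i, k i) \<in> ferrers_diagram n lam"
    and e2: "\<forall>i. Suc i < n \<longrightarrow> (r (Suc i), k i) \<in> ferrers_diagram n lam"
  shows "mkpath n r k \<in> ham_paths n lam"
    and "\<And>i. i < n \<Longrightarrow> rr (mkpath n r k) i = r i \<and> kv (mkpath n r k) i = k i"
proof -
  let ?p = "mkpath n r k"
  have len: "length ?p = 2 * n" by (simp add: mkpath_def)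
  have dist: "distinct ?p"
    unfolding distinct_conv_nth
  proof (intro allI impI)
    fix i j assume i: "i < length ?p" and j: "j < length ?p" and ij: "i \<noteq> j"
    have id: "i div 2 < n" "j div 2 < n" using i j len by auto
    show "?p ! i \<noteq> ?p ! j"
    proof
      assume eq: "?p ! i = ?p ! j"
      show False
      proof (cases "even i")
        case True
        then have ej: "even j" and "r (i div 2) = r (j div 2)"
          using eq mkpath_nth[of i n r k] mkpath_nth[of j n r k] i j len by (auto split: if_splits)
        then have "i div 2 = j div 2" using inj_onD[OF ir] id by auto
        then show False using True ej ij by presburger
      next
        case False
        then have ej: "odd j" and "k (i div 2) = k (j div 2)"
          using eq mkpath_nth[of i n r k] mkpath_nth[of j n r k] i j len by (auto split: if_splits)
        then have "i div 2 = j div 2" using inj_onD[OF ik] id by auto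
        then show False using False ej ij by presburger
      qed
    qed
  qed
  have set: "set ?p = fg_vertices n"
  proof
    show "set ?p \<subseteq> fg_vertices n"
    proof
      fix x assume "x \<in> set ?p"
      then obtain j where j: "j < 2 * n" "x = ?p ! j" using len by (auto simp: in_set_conv_nth)
      then have "j div 2 < n" by auto
      then have "r (j div 2) \<in> {1..n}" "k (j div 2) \<in> {1..n}" using rimg kimg by auto
      then show "x \<in> fg_vertices n" using j mkpath_nth[of j n r k] by (auto simp: fg_vertices_def)
    qed
  next
    show "fg_vertices n \<subseteq> set ?p"
    proof
      fix x assume "x \<in> fg_vertices n"
      then consider a where "x = Inl a" "a \<in> {1..n}" | b where "x = Inr b" "b \<in> {1..n}"
        by (auto simp: fg_vertices_def)
      then show "x \<in> set ?p"
      proof cases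
        case 1
        then obtain i where "i < n" "a = r i" using rimg by (metis imageE lessThan_iff)
        then have "?p ! (2*i) = x" "2 * i < length ?p" using 1 mkpath_nth[of "2*i" n r k] len by auto
        then show ?thesis by (metis nth_mem)
      next
        case 2
        then obtain i where "i < n" "b = k i" using kimg by (metis imageE lessThan_iff)
        then have "?p ! (2*i+1) = x" "2 * i + 1 < length ?p" using 2 mkpath_nth[of "2*i+1" n r k] len by auto
        then show ?thesis by (metis nth_mem)
      qed
    qed
  qed
  have adj: "fg_adj (ferrers_diagram n lam) (?p ! j) (?p ! Suc j)" if j: "Suc j < length ?p" for j
  proof (cases "even j")
    case True
    then have "Suc j div 2 = j div 2" by presburger
    moreover have "j div 2 < n" using j len by auto
    ultimately show ?thesis using True mkpath_nth[of j n r k] mkpath_nth[of "Suc j" n r k] j len e1 by auto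
  next
    case False
    then have "Suc j div 2 = Suc (j div 2)" by presburger
    moreover have "Suc (j div 2) < n" using j len False by presburger
    ultimately show ?thesis using False mkpath_nth[of j n r k] mkpath_nth[of "Suc j" n r k] j len e2 by auto
  qed
  have ne: "?p \<noteq> []" using len n1 by auto
  have hd: "isl (hd ?p)" using ne len n1 by (simp add: hd_conv_nth mkpath_nth)
  show "?p \<in> ham_paths n lam" unfolding ham_paths_def using dist set adj ne hd by blast
  show "rr ?p i = r i \<and> kv ?p i = k i" if "i < n" for i
    using that mkpath_nth[of "2*i" n r k] mkpath_nth[of "2*i+1" n r k] by (simp add: rr_def kv_def)
qed

lemma img_full:
  assumes "inj_on f {..<n}" "f ` {..<n} \<subseteq> {1..n::nat}"
  shows "f ` {..<n} = {1..n}"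
proof (rule card_subset_eq)
  show "card (f ` {..<n}) = card {1..n}" using card_image[OF assms(1)] by simp
qed (use assms in auto)

lemma rook_full:
  assumes f: "ferrers_shape n lam" and R: "R \<in> rook_placements n lam"
  shows "fst ` R = {1..n}" "snd ` R = {1..n}" "finite R"
proof -
  have sub: "R \<subseteq> ferrers_diagram n lam" "card R = n" "inj_on fst R" "inj_on snd R"
    using R by (auto simp: rook_placements_def)
  show fin: "finite R" using finite_subset[OF sub(1) finite_D[OF f]] .
  show "fst ` R = {1..n}"
    by (rule card_subset_eq) (use sub D_sub[OF f] card_image[OF sub(3)] in auto)
  show "snd ` R = {1..n}"
    by (rule card_subset_eq) (use sub D_sub[OF f] card_image[OF sub(4)] in auto)
qed

fun st :: "(nat \<Rightarrow> nat) \<Rightarrow> nat \<Rightarrow> nat \<times> nat set" where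
  "st g 0 = (1, {})"
| "st g (Suc i) = (g (colsel (fst (st g i)) (snd (st g i))),
                   insert (colsel (fst (st g i)) (snd (st g i))) (snd (st g i)))"

definition kk :: "(nat \<Rightarrow> nat) \<Rightarrow> nat \<Rightarrow> nat" where
  "kk g i = fst (st g (Suc i))"

lemma st_rel: "pvk (kk g) i = fst (st g i) \<and> ust (kk g) i = snd (st g i)"
proof (induction i)
  case 0 then show ?case by (simp add: pvk_def)
next
  case (Suc i) then show ?case by (simp add: pvk_def kk_def)
qed

lemma kk_eq: "kk g i = g (cc (kk g) i)"
  using st_rel[of g i] by (simp add: kk_def cc_def)

lemma kk_bounds:
  assumes gi: "inj_on g {1..n}" and gr: "g ` {1..n} \<subseteq> {1..n}" and i: "i \<le> n"
  shows "inj_on (kk g) {..<i} \<and> (\<forall>j<i. cc (kk g) j \<in> {1..n} \<and> kk g j \<in> {1..n})"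
  using i
proof (induction i)
  case 0 then show ?case by simp
next
  case (Suc i)
  let ?k = "kk g"
  from Suc have IH: "inj_on ?k {..<i}" "\<forall>j<i. cc ?k j \<in> {1..n} \<and> ?k j \<in> {1..n}" and i: "i < n" by auto
  have pos: "\<forall>j<i. 1 \<le> ?k j" using IH by auto
  have c1: "1 \<le> cc ?k i" by (rule cc_ge1[OF pos])
  have c2: "cc ?k i \<le> n"
  proof (cases "pvk ?k i \<in> ust ?k i")
    case True then show ?thesis using cc_bound[OF IH(1) pos True] i by simp
  next
    case False
    then have "cc ?k i = pvk ?k i" by (rule cc_out)
    then show ?thesis using IH(2) i by (cases i) (auto simp: pvk_def)
  qed
  have cin: "cc ?k i \<in> {1..n}" using c1 c2 by simp
  have "g (cc ?k i) \<in> {1..n}" using cin gr by blast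
  then have kin: "?k i \<in> {1..n}" using kk_eq[of g i] by simp
  have new: "?k i \<notin> ?k ` {..<i}"
  proof
    assume "?k i \<in> ?k ` {..<i}"
    then obtain j where j: "j < i" "?k i = ?k j" by auto
    then have "g (cc ?k i) = g (cc ?k j)" using kk_eq by metis
    then have "cc ?k i = cc ?k j" using inj_onD[OF gi] cin IH(2) j by auto
    then have "i = j" using inj_onD[OF cc_inj[of ?k "Suc i"]] j by auto
    then show False using j by simp
  qed
  have "inj_on ?k {..<Suc i}" unfolding lessThan_Suc using IH(1) new by simp
  then show ?case using IH(2) cin kin less_Suc_eq by auto
qed

lemma Phi_surj:
  assumes f: "ferrers_shape n lam"
    and A: "A \<in> rook_placements n lam" and B: "B \<in> rook_placements n lam"
  shows "(A, B) \<in> Phi n ` ham_paths n lam"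
proof -
  have n1: "1 \<le> n" using f by (simp add: ferrers_shape_def)
  note RA = rook_full[OF f A] and RB = rook_full[OF f B]
  have Asub: "A \<subseteq> ferrers_diagram n lam" "card A = n" "inj_on fst A" "inj_on snd A"
    using A by (auto simp: rook_placements_def)
  have Bsub: "B \<subseteq> ferrers_diagram n lam" "card B = n" "inj_on fst B" "inj_on snd B"
    using B by (auto simp: rook_placements_def)
  define \<sigma> where "\<sigma> a = (THE b. (a, b) \<in> B)" for a
  define \<tau> where "\<tau> c = (THE a. (a, c) \<in> A)" for c
  have \<sigma>B: "(a, \<sigma> a) \<in> B" if "a \<in> {1..n}" for a
  proof -
    have "a \<in> fst ` B" using that RB(1) by simp
    then obtain b where b: "(a, b) \<in> B" by auto
    have "(THE b. (a, b) \<in> B) = b"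
    proof (rule the_equality)
      show "(a, b) \<in> B" by (rule b)
      fix b' assume "(a, b') \<in> B"
      then show "b' = b" using inj_onD[OF Bsub(3) _ \<open>(a, b') \<in> B\<close> b] by simp
    qed
    then show ?thesis using b by (simp add: \<sigma>_def)
  qed
  have \<tau>A: "(\<tau> c, c) \<in> A" if "c \<in> {1..n}" for c
  proof -
    have "c \<in> snd ` A" using that RA(2) by simp
    then obtain a where a: "(a, c) \<in> A" by auto
    have "(THE a. (a, c) \<in> A) = a"
    proof (rule the_equality)
      show "(a, c) \<in> A" by (rule a)
      fix a' assume "(a', c) \<in> A"
      then show "a' = a" using inj_onD[OF Asub(4) _ \<open>(a', c) \<in> A\<close> a] by simp
    qed
    then show ?thesis using a by (simp add: \<tau>_def)
  qed
  have \<sigma>r: "\<sigma> a \<in> {1..n}" if "a \<in> {1..n}" for a using \<sigma>B[OF that] Bsub(1) D_sub[OF f] by fastforce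
  have \<tau>r: "\<tau> c \<in> {1..n}" if "c \<in> {1..n}" for c using \<tau>A[OF that] Asub(1) D_sub[OF f] by fastforce
  have \<sigma>i: "inj_on \<sigma> {1..n}"
  proof (rule inj_onI)
    fix a a' assume aa: "a \<in> {1..n}" "a' \<in> {1..n}" "\<sigma> a = \<sigma> a'"
    have "(a, \<sigma> a) = (a', \<sigma> a')"
      by (rule inj_onD[OF Bsub(4)]) (use aa \<sigma>B[OF aa(1)] \<sigma>B[OF aa(2)] in auto)
    then show "a = a'" by simp
  qed
  have \<tau>i: "inj_on \<tau> {1..n}"
  proof (rule inj_onI)
    fix c c' assume cc': "c \<in> {1..n}" "c' \<in> {1..n}" "\<tau> c = \<tau> c'"
    have "(\<tau> c, c) = (\<tau> c', c')"
      by (rule inj_onD[OF Asub(3)]) (use cc' \<tau>A[OF cc'(1)] \<tau>A[OF cc'(2)] in auto)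
    then show "c = c'" by simp
  qed
  define g where "g = \<sigma> \<circ> \<tau>"
  have gi: "inj_on g {1..n}" unfolding g_def
    by (rule comp_inj_on[OF \<tau>i]) (rule inj_on_subset[OF \<sigma>i], use \<tau>r in auto)
  have gr: "g ` {1..n} \<subseteq> {1..n}" using \<sigma>r \<tau>r by (auto simp: g_def)
  define k where "k = kk g"
  define r where "r i = \<tau> (cc k i)" for i
  have KB: "inj_on k {..<n}" "\<forall>j<n. cc k j \<in> {1..n} \<and> k j \<in> {1..n}"
    using kk_bounds[OF gi gr, of n] by (auto simp: k_def)
  have kr: "k i = \<sigma> (r i)" for i using kk_eq[of g i] by (simp add: k_def r_def g_def)
  have ri: "inj_on r {..<n}"
  proof (rule inj_onI)
    fix x y assume "x \<in> {..<n}" "y \<in> {..<n}" "r x = r y"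
    then have "cc k x = cc k y" using inj_onD[OF \<tau>i] KB(2) by (auto simp: r_def)
    then show "x = y" using inj_onD[OF cc_inj] \<open>x \<in> _\<close> \<open>y \<in> _\<close> by blast
  qed
  have rimg: "r ` {..<n} = {1..n}" by (rule img_full[OF ri]) (use \<tau>r KB(2) r_def in auto)
  have kimg: "k ` {..<n} = {1..n}" by (rule img_full[OF KB(1)]) (use KB(2) in auto)
  have rA: "(r i, cc k i) \<in> A" if "i < n" for i using \<tau>A KB(2) that by (simp add: r_def)
  have rB: "(r i, k i) \<in> B" if "i < n" for i
  proof -
    have "r i \<in> {1..n}" using rimg that by blast
    then show ?thesis using \<sigma>B kr by metis
  qed
  have e1: "\<forall>i<n. (r i, k i) \<in> ferrers_diagram n lam" using rB Bsub(1) by auto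
  have e2: "\<forall>i. Suc i < n \<longrightarrow> (r (Suc i), k i) \<in> ferrers_diagram n lam"
  proof (intro allI impI)
    fix i assume i: "Suc i < n"
    have "(r (Suc i), cc k (Suc i)) \<in> ferrers_diagram n lam" using rA[OF i] Asub(1) by auto
    moreover have "k i \<le> cc k (Suc i)" using cc_ge_pv[of k "Suc i"] by (simp add: pvk_def)
    moreover have "1 \<le> k i" using KB(2) i by auto
    ultimately show "(r (Suc i), k i) \<in> ferrers_diagram n lam" using D_down by blast
  qed
  note M = mkpath_ham[OF n1 ri rimg KB(1) kimg e1 e2]
  let ?p = "mkpath n r k"
  have kv_eq: "\<forall>j<n. kv ?p j = k j" using M(2) by auto
  have Phi_p: "Phi n ?p = ((\<lambda>j. (r j, cc k j)) ` {..<n}, (\<lambda>j. (r j, k j)) ` {..<n})"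
  proof -
    have "(\<lambda>j. (rr ?p j, cc (kv ?p) j)) ` {..<n} = (\<lambda>j. (r j, cc k j)) ` {..<n}"
      by (rule image_cong) (use M(2) cc_cong[of _ "kv ?p" k] kv_eq in auto)
    moreover have "(\<lambda>j. (rr ?p j, kv ?p j)) ` {..<n} = (\<lambda>j. (r j, k j)) ` {..<n}"
      by (rule image_cong) (use M(2) in auto)
    ultimately show ?thesis by (simp add: Phi_eq)
  qed
  have Aeq: "(\<lambda>j. (r j, cc k j)) ` {..<n} = A"
  proof (rule card_subset_eq[OF RA(3)])
    show "(\<lambda>j. (r j, cc k j)) ` {..<n} \<subseteq> A" using rA by auto
    have "inj_on (\<lambda>j. (r j, cc k j)) {..<n}" using ri by (auto simp: inj_on_def)
    then show "card ((\<lambda>j. (r j, cc k j)) ` {..<n}) = card A" using Asub(2) card_image by fastforce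
  qed
  have Beq: "(\<lambda>j. (r j, k j)) ` {..<n} = B"
  proof (rule card_subset_eq[OF RB(3)])
    show "(\<lambda>j. (r j, k j)) ` {..<n} \<subseteq> B" using rB by auto
    have "inj_on (\<lambda>j. (r j, k j)) {..<n}" using ri by (auto simp: inj_on_def)
    then show "card ((\<lambda>j. (r j, k j)) ` {..<n}) = card B" using Bsub(2) card_image by fastforce
  qed
  show ?thesis using M(1) Phi_p Aeq Beq by (metis image_eqI)
qed



theorem mainTheorem2:
  fixes n :: nat and lam :: "nat \<Rightarrow> nat"
  assumes "ferrers_shape n lam"
  shows "(\<forall>vs \<in> ham_paths n lam. \<forall>i < n.
            (phi_prev n vs i \<in> snd ` phi_A_before n vs i \<longrightarrow>
               (\<exists>c. phi_prev n vs i < c \<and> c \<le> n \<and> c \<notin> snd ` phi_A_before n vs i)) \<and>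
            (fst (path_pairs n vs ! i), phi_col (phi_prev n vs i) (phi_A_before n vs i))
               \<in> ferrers_diagram n lam)
       \<and> bij_betw (Phi n) (ham_paths n lam) (rook_placements n lam \<times> rook_placements n lam)
       \<and> card (ham_paths n lam) = (card (rook_placements n lam))\<^sup>2"
proof -
  have part1: "\<forall>vs \<in> ham_paths n lam. \<forall>i < n.
            (phi_prev n vs i \<in> snd ` phi_A_before n vs i \<longrightarrow>
               (\<exists>c. phi_prev n vs i < c \<and> c \<le> n \<and> c \<notin> snd ` phi_A_before n vs i)) \<and>
            (fst (path_pairs n vs ! i), phi_col (phi_prev n vs i) (phi_A_before n vs i))
               \<in> ferrers_diagram n lam"
  proof (intro ballI allI impI)
    fix vs i assume vs: "vs \<in> ham_paths n lam" and i: "i < n"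
    have pp: "phi_prev n vs i = pvk (kv vs) i" by (rule phi_prev_eq[OF i])
    have pa: "phi_A_before n vs i = (\<lambda>j. (rr vs j, cc (kv vs) j)) ` {..<i}"
      by (rule phi_A_before_eq) (use i in simp)
    have sa: "snd ` phi_A_before n vs i = ust (kv vs) i"
      unfolding pa by (simp add: image_image ust_eq)
    have pc: "phi_col (phi_prev n vs i) (phi_A_before n vs i) = cc (kv vs) i"
      unfolding phi_col_colsel sa pp by (simp add: cc_def)
    have pc2: "phi_col (pvk (kv vs) i) (phi_A_before n vs i) = cc (kv vs) i" using pc pp by simp
    have fp: "fst (path_pairs n vs ! i) = rr vs i" using i by (simp add: path_pairs_eq)
    show "(phi_prev n vs i \<in> snd ` phi_A_before n vs i \<longrightarrow>
               (\<exists>c. phi_prev n vs i < c \<and> c \<le> n \<and> c \<notin> snd ` phi_A_before n vs i)) \<and>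
            (fst (path_pairs n vs ! i), phi_col (phi_prev n vs i) (phi_A_before n vs i))
               \<in> ferrers_diagram n lam"
      unfolding pc fp sa pp pc2 using cc_exists[OF vs i] cc_D[OF vs i] by simp
  qed
  have bij: "bij_betw (Phi n) (ham_paths n lam) (rook_placements n lam \<times> rook_placements n lam)"
    unfolding bij_betw_def
  proof
    show "inj_on (Phi n) (ham_paths n lam)" by (rule Phi_inj[OF assms])
    show "Phi n ` ham_paths n lam = rook_placements n lam \<times> rook_placements n lam"
      using Phi_in Phi_surj[OF assms] by blast
  qed
  have "card (ham_paths n lam) = card (rook_placements n lam \<times> rook_placements n lam)"
    by (rule bij_betw_same_card[OF bij])
  then have "card (ham_paths n lam) = (card (rook_placements n lam))\<^sup>2"
    by (simp add: card_cartesian_product power2_eq_square)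
  then show ?thesis using part1 bij by blast
qed


end
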